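(* Let $S$ be a set with at least two elements and let $T=(-\times S)^S$ be the global state monad, applied pointwise as an indexed monad on $\mathrm{Fam}(\mathbf{Set})$, with unit $\eta_A(a)=(s\mapsto(a,s))$. Take $\Gamma=1$, $A=1$, and the family $B$ over $\Gamma.TA\cong (1\times S)^S$ given by $B(g)=1$ if $g=(s\mapsto( *,s))$ and $B(g)=\emptyset$ otherwise. Then $\prod_{a\in A}(B(\eta_A(a))\times S)^S$ is nonempty while $\prod_{g\in(A\times S)^S}(B(g)\times S)^S$ is empty. Consequently there is no map $\mathrm{Fam}(\mathbf{Set})(\Gamma.A)(1,TB\{\mathbf{p}_\Gamma(\eta_A)\})\to\mathrm{Fam}(\mathbf{Set})(\Gamma.TA)(1,TB)$, so the Eilenberg–Moore dCBPV$^-$ model of $T$ on $\mathrm{Fam}(\mathbf{Set})$ admits no dependent Kleisli extensions.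
   Context: $\mathrm{Fam}(\mathbf{Set}):\mathbf{Set}^{op}\to\mathbf{Cat}$ sends a set $X$ to the category of $X$-indexed families of sets with families of functions as morphisms, reindexing by precomposition. Comprehension: $X.A=\{(x,a)\mid x\in X,a\in A(x)\}$; global elements $1\to A$ over $X$ are dependent functions $\prod_{x\in X}A(x)$. For $g:A\to A'$ over $\Gamma$, $\mathbf{p}_\Gamma(g)$ is $(c,a)\mapsto(c,g_c(a))$. A pointwise monad acts by $(TA)(x)=T(A(x))$. Dependent Kleisli extensions (for empty trailing context) are maps assigning to each global section of $TB\{\mathbf{p}_\Gamma(\eta_A)\}$ over $\Gamma.A$ a global section of $TB$ over $\Gamma.TA$, for $B$ over $\Gamma.TA$, subject to unitality and composition laws. *)

theory Defs
  imports "HOL-Library.FuncSet"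
begin

text \<open>Global state monad on a set X, with the state set S represented by the type 's:
  T X = (X \<times> S)^S.\<close>
definition stT :: "'x set \<Rightarrow> ('s \<Rightarrow> 'x \<times> 's) set" where
  "stT X = (UNIV :: 's set) \<rightarrow> X \<times> (UNIV :: 's set)"

definition eta :: "'x \<Rightarrow> ('s \<Rightarrow> 'x \<times> 's)" where
  "eta a = (\<lambda>s. (a, s))"

text \<open>The family B over Gamma.TA = (1 \<times> S)^S (Gamma = A = 1, 1 = unit).\<close>
definition Bfam :: "('s \<Rightarrow> unit \<times> 's) \<Rightarrow> unit set" where
  "Bfam g = (if g = eta () then UNIV else {})"

text \<open>Global sections of TB{p(eta_A)} over Gamma.A, and of TB over Gamma.TA.\<close>
definition secs_reindexed :: "(unit \<Rightarrow> ('s \<Rightarrow> unit \<times> 's)) set" where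
  "secs_reindexed = Pi (UNIV :: unit set) (\<lambda>a. stT (Bfam (eta a :: 's \<Rightarrow> unit \<times> 's)))"

definition secs_TA :: "(('s \<Rightarrow> unit \<times> 's) \<Rightarrow> ('s \<Rightarrow> unit \<times> 's)) set" where
  "secs_TA = Pi (UNIV :: ('s \<Rightarrow> unit \<times> 's) set) (\<lambda>g. stT (Bfam g))"

end

theory Submission
  imports Defs
begin

theorem mainTheorem7:
  assumes "\<exists>x y :: 's. x \<noteq> y"
  shows "(secs_reindexed :: (unit \<Rightarrow> ('s \<Rightarrow> unit \<times> 's)) set) \<noteq> {}
    \<and> (secs_TA :: (('s \<Rightarrow> unit \<times> 's) \<Rightarrow> ('s \<Rightarrow> unit \<times> 's)) set) = {}
    \<and> \<not> (\<exists>F. F \<in> (secs_reindexed :: (unit \<Rightarrow> ('s \<Rightarrow> unit \<times> 's)) set)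
                    \<rightarrow> (secs_TA :: (('s \<Rightarrow> unit \<times> 's) \<Rightarrow> ('s \<Rightarrow> unit \<times> 's)) set))"
proof -
  obtain x y :: 's where xy: "x \<noteq> y" using assms by blast
  have ne: "(\<lambda>_. eta ()) \<in> (secs_reindexed :: (unit \<Rightarrow> ('s \<Rightarrow> unit \<times> 's)) set)"
    by (auto simp: secs_reindexed_def stT_def Bfam_def)
  define g :: "'s \<Rightarrow> unit \<times> 's" where "g = (\<lambda>s. ((), x))"
  have gne: "g \<noteq> eta ()"
  proof
    assume "g = eta ()"
    hence "g y = eta () y" by simp
    thus False using xy by (simp add: g_def eta_def)
  qed
  have emp: "(secs_TA :: (('s \<Rightarrow> unit \<times> 's) \<Rightarrow> ('s \<Rightarrow> unit \<times> 's)) set) = {}"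
  proof (rule ccontr)
    assume "(secs_TA :: (('s \<Rightarrow> unit \<times> 's) \<Rightarrow> ('s \<Rightarrow> unit \<times> 's)) set) \<noteq> {}"
    then obtain h where "h \<in> (secs_TA :: (('s \<Rightarrow> unit \<times> 's) \<Rightarrow> ('s \<Rightarrow> unit \<times> 's)) set)" by blast
    hence "h g \<in> stT (Bfam g)" by (auto simp: secs_TA_def)
    hence "h g x \<in> Bfam g \<times> UNIV" by (auto simp: stT_def)
    thus False using gne by (simp add: Bfam_def)
  qed
  show ?thesis using ne emp by blast
qed

end
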